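(* For every stratified space $(A,\Sigma)$ there exists a family of subsets $(W_X)_{X\in\Sigma}$ such that each $W_X$ is an open neighbourhood of $X$, and for $X,Y\in\Sigma$, $W_X$ intersects $W_Y$ if and only if $X$ and $Y$ are comparable (i.e. $X\le Y$ or $Y\le X$).
   Context: A stratified space $(A,\Sigma)$ is a second-countable metric space $A$ with a locally finite partition $\Sigma$ of $A$ into locally closed subsets (strata) such that whenever $Y\cap cl(X)\neq\emptyset$ one has $Y\subset cl(X)$; this is written $Y\le X$ (and $X$ is said to be incident to $Y$). The relation $\le$ is a partial order on $\Sigma$. *)

theory Defs
  imports "HOL-Analysis.Analysis"
begin

definition locally_closed :: "'a::topological_space set \<Rightarrow> bool" where
  "locally_closed S \<longleftrightarrow> (\<exists>U C. open U \<and> closed C \<and> S = U \<inter> C)"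

definition stratum_le :: "'a::topological_space set \<Rightarrow> 'a set \<Rightarrow> bool" where
  "stratum_le Y X \<longleftrightarrow> Y \<subseteq> closure X"

definition stratified_space :: "'a::{metric_space,second_countable_topology} set set \<Rightarrow> bool" where
  "stratified_space \<Sigma> \<longleftrightarrow>
     \<Union>\<Sigma> = UNIV \<and> {} \<notin> \<Sigma> \<and> disjoint \<Sigma> \<and>
     locally_finite_in euclidean \<Sigma> \<and>
     (\<forall>S\<in>\<Sigma>. locally_closed S) \<and>
     (\<forall>X\<in>\<Sigma>. \<forall>Y\<in>\<Sigma>. Y \<inter> closure X \<noteq> {} \<longrightarrow> Y \<subseteq> closure X)"

end

theory Submission
  imports Defs
begin

definition incZ :: "'a::{metric_space,second_countable_topology} set set \<Rightarrow> 'a set \<Rightarrow> 'a set" where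
  "incZ \<Sigma> X = \<Union>{Y\<in>\<Sigma>. \<not> (stratum_le X Y \<or> stratum_le Y X)}"

lemma notin_closure_incZ:
  fixes \<Sigma> :: "'a::{metric_space,second_countable_topology} set set"
  assumes S: "stratified_space \<Sigma>" and X: "X \<in> \<Sigma>" and x: "x \<in> X"
  shows "x \<notin> closure (incZ \<Sigma> X)"
proof
  assume xc: "x \<in> closure (incZ \<Sigma> X)"
  have lf: "locally_finite_in euclidean \<Sigma>" and fr: "\<forall>X\<in>\<Sigma>. \<forall>Y\<in>\<Sigma>. Y \<inter> closure X \<noteq> {} \<longrightarrow> Y \<subseteq> closure X"
    using S unfolding stratified_space_def by auto
  obtain V where V: "open V" "x \<in> V" and fin: "finite {U\<in>\<Sigma>. U \<inter> V \<noteq> {}}"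
    using lf unfolding locally_finite_in_def by auto
  define F where "F = {U\<in>\<Sigma>. U \<inter> V \<noteq> {} \<and> \<not> (stratum_le X U \<or> stratum_le U X)}"
  have finF: "finite F" using fin unfolding F_def by (rule rev_finite_subset) auto
  define C where "C = \<Union>(closure ` F)"
  have cC: "closed C" unfolding C_def using finF by (intro closed_Union) auto
  have xC: "x \<notin> C"
  proof
    assume "x \<in> C"
    then obtain U where U: "U \<in> F" "x \<in> closure U" unfolding C_def by auto
    then have "U \<in> \<Sigma>" "X \<inter> closure U \<noteq> {}" using x unfolding F_def by auto
    then have "X \<subseteq> closure U" using fr X by blast
    then show False using U unfolding F_def stratum_le_def by auto
  qed
  have o: "open (V - C)" using V cC by auto
  have "(V - C) \<inter> incZ \<Sigma> X = {}"
    unfolding incZ_def C_def F_def using closure_subset by fastforce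
  then have "(V - C) \<inter> closure (incZ \<Sigma> X) = {}" using open_Int_closure_eq_empty[OF o] by blast
  then show False using xc xC V by blast
qed

theorem lemma1p3p17:
  fixes \<Sigma> :: "'a::{metric_space,second_countable_topology} set set"
  assumes "stratified_space \<Sigma>"
  shows "\<exists>W :: 'a set \<Rightarrow> 'a set.
           (\<forall>X\<in>\<Sigma>. open (W X) \<and> X \<subseteq> W X) \<and>
           (\<forall>X\<in>\<Sigma>. \<forall>Y\<in>\<Sigma>. W X \<inter> W Y \<noteq> {} \<longleftrightarrow> (stratum_le X Y \<or> stratum_le Y X))"
proof -
  define W where "W X = (if incZ \<Sigma> X = {} then UNIV
      else {p. infdist p X < infdist p (incZ \<Sigma> X)})" for X
  have ne: "{} \<notin> \<Sigma>" using assms unfolding stratified_space_def by auto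
  have opn: "open (W X)" for X
    unfolding W_def by (auto intro!: open_Collect_less continuous_intros)
  have sub: "X \<subseteq> W X" if X: "X \<in> \<Sigma>" for X
  proof
    fix x assume x: "x \<in> X"
    show "x \<in> W X"
    proof (cases "incZ \<Sigma> X = {}")
      case False
      have "x \<notin> closure (incZ \<Sigma> X)" using notin_closure_incZ[OF assms X x] .
      then have "infdist x (incZ \<Sigma> X) \<noteq> 0" using in_closure_iff_infdist_zero[OF False] by auto
      then have "0 < infdist x (incZ \<Sigma> X)" using infdist_nonneg[of x] by (simp add: order_le_neq_trans)
      then show ?thesis using False x unfolding W_def by simp
    qed (simp add: W_def)
  qed
  have cmp: "W X \<inter> W Y \<noteq> {}" if X: "X \<in> \<Sigma>" and Y: "Y \<in> \<Sigma>" and le: "stratum_le X Y" for X Y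
  proof
    assume e: "W X \<inter> W Y = {}"
    obtain x where "x \<in> X" using X ne by (metis ex_in_conv)
    then have "x \<in> W X \<inter> closure Y" using sub[OF X] le unfolding stratum_le_def by auto
    then have "W X \<inter> Y \<noteq> {}" using open_Int_closure_eq_empty[OF opn[of X], of Y] by blast
    then show False using e sub[OF Y] by blast
  qed
  have inc: "W X \<inter> W Y = {}" if X: "X \<in> \<Sigma>" and Y: "Y \<in> \<Sigma>" and n: "\<not> (stratum_le X Y \<or> stratum_le Y X)" for X Y
  proof (rule ccontr)
    assume "W X \<inter> W Y \<noteq> {}"
    then obtain p where p: "p \<in> W X" "p \<in> W Y" by blast
    have YZ: "Y \<subseteq> incZ \<Sigma> X" and XZ: "X \<subseteq> incZ \<Sigma> Y" using X Y n unfolding incZ_def by auto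
    have Yne: "Y \<noteq> {}" and Xne: "X \<noteq> {}" using X Y ne by auto
    have zx: "incZ \<Sigma> X \<noteq> {}" using YZ Yne by auto
    have zy: "incZ \<Sigma> Y \<noteq> {}" using XZ Xne by auto
    have "infdist p X < infdist p (incZ \<Sigma> X)" using p zx unfolding W_def by auto
    also have "\<dots> \<le> infdist p Y" using infdist_mono[OF YZ Yne] .
    also have "\<dots> < infdist p (incZ \<Sigma> Y)" using p zy unfolding W_def by auto
    also have "\<dots> \<le> infdist p X" using infdist_mono[OF XZ Xne] .
    finally show False by simp
  qed
  show ?thesis
    apply (rule exI[of _ W])
    using opn sub cmp inc by (metis Int_commute)
qed

end
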